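(* Let $k\ge4$, $n\ge 2k$, and let $\mathcal F,\mathcal G\subset\binom{[n]}{k}$ be cross-intersecting. Suppose that for some $\{x,y\}\in\binom{[n]}{2}$, $$|\mathcal F(x,y)|\ge\binom{n-3}{k-3}+\binom{n-4}{k-3}+\binom{n-6}{k-4}.$$ Then $|\mathcal G(\bar x,\bar y)|\le\binom{n-5}{k-3}+\binom{n-6}{k-3}$.
   Context: Cross-intersecting: $F\cap G\ne\emptyset$ for all $F\in\mathcal F,G\in\mathcal G$. $\mathcal F(x,y)=\{F\setminus\{x,y\}:F\in\mathcal F,\ \{x,y\}\subset F\}$ and $\mathcal G(\bar x,\bar y)=\{G\in\mathcal G: G\cap\{x,y\}=\emptyset\}$. *)

theory Defs
  imports Main
begin

definition cross_intersecting :: "'a set set \<Rightarrow> 'a set set \<Rightarrow> bool" where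
  "cross_intersecting F G \<longleftrightarrow> (\<forall>A\<in>F. \<forall>B\<in>G. A \<inter> B \<noteq> {})"

definition link2 :: "'a set set \<Rightarrow> 'a \<Rightarrow> 'a \<Rightarrow> 'a set set" where
  "link2 F x y = {A - {x, y} | A. A \<in> F \<and> {x, y} \<subseteq> A}"

definition avoid2 :: "'a set set \<Rightarrow> 'a \<Rightarrow> 'a \<Rightarrow> 'a set set" where
  "avoid2 G x y = {B \<in> G. B \<inter> {x, y} = {}}"

end

theory Submission
  imports Defs
begin


definition al :: "nat \<Rightarrow> nat \<Rightarrow> nat" where
  "al m a = (if a = 0 then 0 else if a = 1 then 2 else
     (m - 1 choose (a - 1)) + (m - 2 choose (a - 1)) + (m - 4 choose (a - 2)))"
definition be :: "nat \<Rightarrow> nat \<Rightarrow> nat" where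
  "be m b = (if b < 3 then 0 else (m - 3 choose (b - 3)) + (m - 4 choose (b - 3)))"
definition ga :: "nat \<Rightarrow> nat \<Rightarrow> nat \<Rightarrow> nat" where
  "ga m a b = (if a < 2 then 0 else (m - b - 2 choose (a - 2)))"

lemma be_pascal:
  assumes "b \<ge> 3" "m \<ge> 6"
  shows "be m b = be (m - 1) b + be (m - 1) (b - 1)"
proof (cases "b = 3")
  case True thus ?thesis using assms by (simp add: be_def)
next
  case False
  define c where "c = b - 4"
  have c: "b = c + 4" using assms False unfolding c_def by simp
  define p where "p = m - 6"
  have p: "m = p + 6" using assms unfolding p_def by simp
  show ?thesis unfolding be_def using c p
    by (simp add: numeral_eq_Suc)
qed

lemma al_pascal:
  assumes "a \<ge> 2" "m \<ge> 6"
  shows "al m a = al (m - 1) a + al (m - 1) (a - 1)"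
proof -
  define p where "p = m - 6"
  have p: "m = p + 6" using assms unfolding p_def by simp
  show ?thesis
  proof (cases "a = 2")
    case True thus ?thesis using p by (simp add: al_def numeral_eq_Suc)
  next
    case False
    define c where "c = a - 3"
    have c: "a = c + 3" using assms False unfolding c_def by simp
    show ?thesis unfolding al_def using c p by (simp add: numeral_eq_Suc)
  qed
qed

lemma ga_pascal:
  assumes "a \<ge> 2" "m \<ge> a + b + 1"
  shows "ga m a b \<le> ga (m - 1) a b + ga (m - 1) (a - 1) b"
proof (cases "a = 2")
  case True thus ?thesis by (simp add: ga_def)
next
  case False
  define c where "c = a - 3"
  have c: "a = c + 3" using assms False unfolding c_def by simp
  define q where "q = m - b - 3"
  have q: "m - b - 2 = Suc q" "m - 1 - b - 2 = q" using assms c unfolding q_def by auto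
  show ?thesis unfolding ga_def using c q by (simp add: numeral_eq_Suc)
qed

lemma ga_shift: "b \<ge> 1 \<Longrightarrow> ga (m - 1) a (b - 1) = ga m a b"
  unfolding ga_def by (simp add: diff_diff_left)

lemma base_eq_arith:
  assumes "a \<ge> 2" "b \<ge> 3"
  shows "(a + b choose a) \<le> al (a + b) a + be (a + b) b"
proof -
  define c where "c = a - 2"
  define d where "d = b - 3"
  have ab: "a = c + 2" "b = d + 3" using assms unfolding c_def d_def by auto
  have s1: "(c + d + 2 choose (d)) = (c + d + 2 choose (c + 2))"
    using binomial_symmetric[of d "c+d+2"] by simp
  have s2: "(c + d + 1 choose (d)) = (c + d + 1 choose (c + 1))"
    using binomial_symmetric[of d "c+d+1"] by simp
  show ?thesis unfolding al_def be_def using ab s1 s2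
    by (simp add: numeral_eq_Suc add.commute[of _ d] add.left_commute[of _ d])
qed

lemma b2_arith:
  assumes "a \<ge> 2" "m \<ge> a + 2"
  shows "(m choose a) - (m - 2 choose a) + ga m a 2 \<le> al m a"
proof -
  define c where "c = a - 2"
  define p where "p = m - a - 2"
  have ab: "a = c + 2" "m = p + c + 4" using assms unfolding c_def p_def by auto
  show ?thesis unfolding al_def ga_def using ab
    by (simp add: numeral_eq_Suc)
qed


definition bs :: "'a set \<Rightarrow> nat \<Rightarrow> 'a set set" where
  "bs X a = {A. A \<subseteq> X \<and> card A = a}"

definition sh :: "'a \<Rightarrow> 'a \<Rightarrow> 'a set \<Rightarrow> 'a set" where
  "sh j t A = (if t \<in> A \<and> j \<notin> A then insert j (A - {t}) else A)"

definition S :: "'a \<Rightarrow> 'a \<Rightarrow> 'a set set \<Rightarrow> 'a set set" where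
  "S j t F = sh j t ` {A \<in> F. sh j t A \<notin> F} \<union> {A \<in> F. sh j t A \<in> F}"

definition stable :: "'a set \<Rightarrow> 'a \<Rightarrow> 'a set set \<Rightarrow> bool" where
  "stable X t F \<longleftrightarrow> (\<forall>j\<in>X - {t}. \<forall>A\<in>F. t \<in> A \<and> j \<notin> A \<longrightarrow> insert j (A - {t}) \<in> F)"

lemma sh_moved: "sh j t A \<noteq> A \<Longrightarrow> t \<in> A \<and> j \<notin> A \<and> sh j t A = insert j (A - {t})"
  unfolding sh_def by (cases "t \<in> A \<and> j \<notin> A") (simp_all only: if_True if_False, simp_all)

lemma sh_moved2: "A \<in> F \<Longrightarrow> sh j t A \<notin> F \<Longrightarrow> t \<in> A \<and> j \<notin> A \<and> sh j t A = insert j (A - {t})"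
  by (rule sh_moved) auto

lemma sh_inj: "j \<noteq> t \<Longrightarrow> inj_on (sh j t) {A \<in> F. sh j t A \<notin> F}"
proof (rule inj_onI)
  fix A B assume j: "j \<noteq> t" and A: "A \<in> {A \<in> F. sh j t A \<notin> F}" and B: "B \<in> {A \<in> F. sh j t A \<notin> F}"
    and e: "sh j t A = sh j t B"
  have hA: "t \<in> A \<and> j \<notin> A" using A unfolding sh_def by (auto split: if_splits)
  have hB: "t \<in> B \<and> j \<notin> B" using B unfolding sh_def by (auto split: if_splits)
  have "insert j (A - {t}) = insert j (B - {t})" using e hA hB by (simp add: sh_def)
  hence "insert t (insert j (A - {t}) - {j}) = insert t (insert j (B - {t}) - {j})" by simp
  have "A = insert t (insert j (A - {t}) - {j})" using hA j by blast
  moreover have "B = insert t (insert j (B - {t}) - {j})" using hB j by blast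
  ultimately show "A = B" using \<open>insert j (A - {t}) = insert j (B - {t})\<close> by metis
qed

lemma S_card:
  assumes "finite F" "j \<noteq> t"
  shows "card (S j t F) = card F"
proof -
  let ?C = "{A \<in> F. sh j t A \<notin> F}"
  have d: "sh j t ` ?C \<inter> {A \<in> F. sh j t A \<in> F} = {}" by auto
  have "card (S j t F) = card (sh j t ` ?C) + card {A \<in> F. sh j t A \<in> F}"
    unfolding S_def using assms by (intro card_Un_disjoint) auto
  also have "card (sh j t ` ?C) = card ?C" using sh_inj[OF assms(2)] by (rule card_image)
  also have "card ?C + card {A \<in> F. sh j t A \<in> F} = card F"
  proof -
    have e: "{A \<in> F. sh j t A \<in> F} = F - ?C" by blast
    have "?C \<subseteq> F" by blast
    hence "card (F - ?C) = card F - card ?C" "card ?C \<le> card F"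
      using assms(1) by (simp_all add: card_Diff_subset card_mono finite_subset)
    thus ?thesis using e by simp
  qed
  finally show ?thesis .
qed

lemma sh_bs:
  assumes "finite X" "j \<in> X" "A \<in> bs X a"
  shows "sh j t A \<in> bs X a"
proof (cases "t \<in> A \<and> j \<notin> A")
  case True
  have fA: "finite A" using assms finite_subset unfolding bs_def by auto
  have "card (insert j (A - {t})) = card (A - {t}) + 1" using True fA by simp
  also have "\<dots> = card A"
  proof -
    have "card A > 0" using True fA card_gt_0_iff by blast
    thus ?thesis using True fA by (simp add: card_Diff_singleton)
  qed
  finally show ?thesis using True assms unfolding bs_def sh_def by auto
next
  case False
  hence "sh j t A = A" unfolding sh_def by (simp only: if_False)
  thus ?thesis using assms by simp
qed

lemma S_bs:
  assumes "finite X" "j \<in> X" "F \<subseteq> bs X a"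
  shows "S j t F \<subseteq> bs X a"
proof
  fix C assume "C \<in> S j t F"
  then consider A where "A \<in> F" "C = sh j t A" | "C \<in> F" unfolding S_def by blast
  thus "C \<in> bs X a" using assms sh_bs[OF assms(1,2)] by cases auto
qed

lemma S_cross:
  assumes "j \<noteq> t" "cross_intersecting F G"
  shows "cross_intersecting (S j t F) (S j t G)"
  unfolding cross_intersecting_def
proof (intro ballI)
  fix A' B' assume A': "A' \<in> S j t F" and B': "B' \<in> S j t G"
  show "A' \<inter> B' \<noteq> {}"
  proof
    assume dis: "A' \<inter> B' = {}"
    from A' consider (a1) A where "A \<in> F" "sh j t A \<notin> F" "A' = sh j t A"
      | (a2) "A' \<in> F" "sh j t A' \<in> F" unfolding S_def by blast
    then show False
    proof cases
      case a1
      have hA: "t \<in> A" "j \<notin> A" "A' = insert j (A - {t})" using a1 sh_moved2[of A F j t] by auto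
      from B' consider (b1) B where "B \<in> G" "sh j t B \<notin> G" "B' = sh j t B"
        | (b2) "B' \<in> G" "sh j t B' \<in> G" unfolding S_def by blast
      then show False
      proof cases
        case b1
        have "j \<in> B'" using b1 sh_moved2[of B G j t] by auto
        thus False using dis hA by auto
      next
        case b2
        have "A \<inter> B' \<noteq> {}" using assms a1 b2 unfolding cross_intersecting_def by blast
        hence tB: "t \<in> B'" using dis hA by auto
        have jB: "j \<notin> B'" using dis hA by auto
        have e: "sh j t B' = insert j (B' - {t})" using tB jB by (simp add: sh_def)
        have "A \<inter> sh j t B' \<noteq> {}" using assms a1 b2 unfolding cross_intersecting_def by blast
        hence "A \<inter> insert j (B' - {t}) \<noteq> {}" using e by simp
        thus False using dis hA by auto
      qed
    next
      case a2
      from B' consider (b1) B where "B \<in> G" "sh j t B \<notin> G" "B' = sh j t B"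
        | (b2) "B' \<in> G" "sh j t B' \<in> G" unfolding S_def by blast
      then show False
      proof cases
        case b1
        have hB: "t \<in> B" "j \<notin> B" "B' = insert j (B - {t})" using b1 sh_moved2[of B G j t] by auto
        have "A' \<inter> B \<noteq> {}" using assms a2 b1 unfolding cross_intersecting_def by blast
        hence tA: "t \<in> A'" using dis hB by auto
        have jA: "j \<notin> A'" using dis hB by auto
        have e: "sh j t A' = insert j (A' - {t})" using tA jA by (simp add: sh_def)
        have "sh j t A' \<inter> B \<noteq> {}" using assms a2 b1 unfolding cross_intersecting_def by blast
        hence "insert j (A' - {t}) \<inter> B \<noteq> {}" using e by simp
        thus False using dis hB by auto
      next
        case b2
        thus False using assms a2 dis unfolding cross_intersecting_def by blast
      qed
    qed
  qed
qed

lemma S_count: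
  assumes "finite F" "j \<noteq> t"
  shows "{C \<in> S j t F. t \<in> C} \<subseteq> {A \<in> F. t \<in> A}"
proof
  fix C assume C: "C \<in> {C \<in> S j t F. t \<in> C}"
  show "C \<in> {A \<in> F. t \<in> A}"
  proof (cases "C \<in> F")
    case True thus ?thesis using C by simp
  next
    case False
    then obtain A where A: "A \<in> F" "sh j t A \<notin> F" "C = sh j t A" using C unfolding S_def by blast
    have "t \<in> A \<and> j \<notin> A" using A unfolding sh_def by (metis)
    hence "C = insert j (A - {t})" using A unfolding sh_def by simp
    thus ?thesis using C assms by simp
  qed
qed

lemma S_count_strict:
  assumes "finite F" "j \<noteq> t" "A \<in> F" "t \<in> A" "j \<notin> A" "insert j (A - {t}) \<notin> F"
  shows "card {C \<in> S j t F. t \<in> C} < card {A \<in> F. t \<in> A}"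
proof (rule psubset_card_mono)
  show "finite {A \<in> F. t \<in> A}" using assms by simp
  have "A \<notin> S j t F" using assms unfolding S_def sh_def by (auto split: if_splits)
  thus "{C \<in> S j t F. t \<in> C} \<subset> {A \<in> F. t \<in> A}" using S_count[OF assms(1,2)] assms by blast
qed



lemma bs_finite: "finite X \<Longrightarrow> F \<subseteq> bs X a \<Longrightarrow> finite F"
  unfolding bs_def by (rule finite_subset[of _ "Pow X"]) auto

lemma exists_stable:
  assumes "finite X" "t \<in> X"
  shows "F \<subseteq> bs X a \<Longrightarrow> G \<subseteq> bs X b \<Longrightarrow> cross_intersecting F G \<Longrightarrow>
    \<exists>F' G'. F' \<subseteq> bs X a \<and> G' \<subseteq> bs X b \<and> card F' = card F \<and> card G' = card G \<and>
      cross_intersecting F' G' \<and> stable X t F' \<and> stable X t G'"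
proof (induction "card {A \<in> F. t \<in> A} + card {B \<in> G. t \<in> B}" arbitrary: F G rule: less_induct)
  case less
  show ?case
  proof (cases "stable X t F \<and> stable X t G")
    case True thus ?thesis using less.prems by blast
  next
    case False
    then obtain j where j: "j \<in> X" "j \<noteq> t" and
      w: "(\<exists>A\<in>F. t \<in> A \<and> j \<notin> A \<and> insert j (A - {t}) \<notin> F) \<or>
          (\<exists>A\<in>G. t \<in> A \<and> j \<notin> A \<and> insert j (A - {t}) \<notin> G)"
      unfolding stable_def by blast
    have fF: "finite F" and fG: "finite G" using bs_finite assms less.prems by blast+
    let ?F = "S j t F" and ?G = "S j t G"
    have c1: "card {A \<in> ?F. t \<in> A} \<le> card {A \<in> F. t \<in> A}"
      by (rule card_mono) (use fF S_count[OF fF j(2)] in auto)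
    have c2: "card {A \<in> ?G. t \<in> A} \<le> card {A \<in> G. t \<in> A}"
      by (rule card_mono) (use fG S_count[OF fG j(2)] in auto)
    have "card {A \<in> ?F. t \<in> A} < card {A \<in> F. t \<in> A} \<or> card {A \<in> ?G. t \<in> A} < card {A \<in> G. t \<in> A}"
      using w S_count_strict[OF fF j(2)] S_count_strict[OF fG j(2)] by blast
    hence lt: "card {A \<in> ?F. t \<in> A} + card {B \<in> ?G. t \<in> B} < card {A \<in> F. t \<in> A} + card {B \<in> G. t \<in> B}"
      using c1 c2 by linarith
    have p: "?F \<subseteq> bs X a" "?G \<subseteq> bs X b" "cross_intersecting ?F ?G"
      using S_bs[OF assms(1) j(1)] S_cross[OF j(2)] less.prems by auto
    from less.hyps[OF lt p] obtain F' G' where r: "F' \<subseteq> bs X a" "G' \<subseteq> bs X b"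
      "card F' = card ?F" "card G' = card ?G" "cross_intersecting F' G'" "stable X t F'" "stable X t G'"
      by blast
    show ?thesis using r S_card[OF fF j(2)] S_card[OF fG j(2)] by metis
  qed
qed

lemma stable_aux:
  assumes "finite X" "stable X t F" "cross_intersecting F G" "A \<in> F" "t \<in> A" "B \<in> G"
    "(A - {t}) \<inter> B = {}" "A \<union> B \<subseteq> X" "card (A \<union> B) < card X"
  shows False
proof -
  have "X - (A \<union> B) \<noteq> {}"
  proof
    assume "X - (A \<union> B) = {}"
    hence "X = A \<union> B" using assms(8) by blast
    thus False using assms(9) by simp
  qed
  then obtain j where j: "j \<in> X" "j \<notin> A" "j \<notin> B" by blast
  have "j \<noteq> t" using j assms(5) by blast
  hence "insert j (A - {t}) \<in> F" using assms(2,4,5) j unfolding stable_def by blast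
  hence "insert j (A - {t}) \<inter> B \<noteq> {}" using assms(3,6) unfolding cross_intersecting_def by blast
  thus False using assms(7) j by blast
qed

lemma cross_sym: "cross_intersecting F G \<Longrightarrow> cross_intersecting G F"
  unfolding cross_intersecting_def by blast

lemma split0: "F \<subseteq> bs X a \<Longrightarrow> {A \<in> F. t \<notin> A} \<subseteq> bs (X - {t}) a"
  unfolding bs_def by auto

lemma split1: "finite X \<Longrightarrow> F \<subseteq> bs X a \<Longrightarrow> (\<lambda>A. A - {t}) ` {A \<in> F. t \<in> A} \<subseteq> bs (X - {t}) (a - 1)"
proof
  fix C assume fX: "finite X" and F: "F \<subseteq> bs X a" and C: "C \<in> (\<lambda>A. A - {t}) ` {A \<in> F. t \<in> A}"
  then obtain A where A: "A \<in> F" "t \<in> A" "C = A - {t}" by blast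
  have "A \<subseteq> X" "card A = a" using A F unfolding bs_def by auto
  moreover have "finite A" using \<open>A \<subseteq> X\<close> fX finite_subset by blast
  ultimately show "C \<in> bs (X - {t}) (a - 1)" using A unfolding bs_def by auto
qed

lemma split_card:
  assumes "finite F"
  shows "card F = card {A \<in> F. t \<notin> A} + card ((\<lambda>A. A - {t}) ` {A \<in> F. t \<in> A})"
proof -
  have inj: "inj_on (\<lambda>A. A - {t}) {A \<in> F. t \<in> A}"
  proof (rule inj_onI)
    fix A B assume "A \<in> {A \<in> F. t \<in> A}" "B \<in> {A \<in> F. t \<in> A}" "A - {t} = B - {t}"
    thus "A = B" by blast
  qed
  have "F = {A \<in> F. t \<notin> A} \<union> {A \<in> F. t \<in> A}" by blast
  hence "card F = card {A \<in> F. t \<notin> A} + card {A \<in> F. t \<in> A}"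
    using assms by (metis (no_types, lifting) card_Un_disjoint disjoint_iff finite_Un mem_Collect_eq)
  thus ?thesis using card_image[OF inj] by simp
qed



lemma card_bs: "finite X \<Longrightarrow> card (bs X a) = card X choose a"
  unfolding bs_def by (rule n_subsets)

lemma count_containing:
  assumes "finite X" "P \<subseteq> X"
  shows "card {B \<in> bs X b. P \<subseteq> B} \<le> card X - card P choose (b - card P)"
proof -
  have fP: "finite P" using assms finite_subset by blast
  have "inj_on (\<lambda>B. B - P) {B \<in> bs X b. P \<subseteq> B}"
    by (rule inj_onI) blast
  moreover have "(\<lambda>B. B - P) ` {B \<in> bs X b. P \<subseteq> B} \<subseteq> bs (X - P) (b - card P)"
  proof
    fix C assume "C \<in> (\<lambda>B. B - P) ` {B \<in> bs X b. P \<subseteq> B}"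
    then obtain B where B: "B \<subseteq> X" "card B = b" "P \<subseteq> B" "C = B - P" unfolding bs_def by blast
    have "finite B" using B assms finite_subset by blast
    thus "C \<in> bs (X - P) (b - card P)" using B fP unfolding bs_def by (auto simp: card_Diff_subset)
  qed
  ultimately have "card {B \<in> bs X b. P \<subseteq> B} \<le> card (bs (X - P) (b - card P))"
    by (rule card_inj_on_le) (rule bs_finite[OF finite_Diff[OF assms(1)] order_refl])
  also have "\<dots> = card X - card P choose (b - card P)"
    using assms by (simp add: card_bs card_Diff_subset fP)
  finally show ?thesis .
qed

lemma base_a0:
  assumes "finite X" "F \<subseteq> bs X 0" "cross_intersecting F G" "G \<noteq> {}"
  shows "card F = 0"
proof -
  have "F = {}"
  proof (rule ccontr)
    assume "F \<noteq> {}"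
    then obtain A where A: "A \<in> F" by blast
    hence "A \<subseteq> X" "card A = 0" using assms unfolding bs_def by auto
    have "finite A" using \<open>A \<subseteq> X\<close> assms(1) finite_subset by blast
    hence "A = {}" using \<open>card A = 0\<close> by simp
    obtain B where "B \<in> G" using assms by blast
    thus False using A \<open>A = {}\<close> assms(3) unfolding cross_intersecting_def by blast
  qed
  thus ?thesis by simp
qed

lemma base_a1:
  assumes "finite X" "card X = m" "F \<subseteq> bs X 1" "G \<subseteq> bs X b" "cross_intersecting F G"
    "be m b < card G"
  shows "card F \<le> 2"
proof (rule ccontr)
  assume "\<not> card F \<le> 2"
  hence "3 \<le> card F" by simp
  then obtain T where T: "T \<subseteq> F" "card T = 3" by (meson obtain_subset_with_card_n)
  from T(2) obtain A1 A2 A3 where A: "T = {A1, A2, A3}" "A1 \<noteq> A2" "A2 \<noteq> A3" "A1 \<noteq> A3"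
    unfolding card_3_iff by blast
  have inF: "A1 \<in> F" "A2 \<in> F" "A3 \<in> F" using T A by auto
  have s: "\<And>A. A \<in> F \<Longrightarrow> \<exists>p. A = {p} \<and> p \<in> X"
  proof -
    fix A assume "A \<in> F"
    hence "A \<subseteq> X" "card A = 1" using assms unfolding bs_def by auto
    then obtain p where "A = {p}" using card_1_singletonE by blast
    thus "\<exists>p. A = {p} \<and> p \<in> X" using \<open>A \<subseteq> X\<close> by blast
  qed
  obtain p1 where p1: "A1 = {p1}" "p1 \<in> X" using s[OF inF(1)] by blast
  obtain p2 where p2: "A2 = {p2}" "p2 \<in> X" using s[OF inF(2)] by blast
  obtain p3 where p3: "A3 = {p3}" "p3 \<in> X" using s[OF inF(3)] by blast
  have p: "A1 = {p1}" "A2 = {p2}" "A3 = {p3}" "p1 \<in> X" "p2 \<in> X" "p3 \<in> X"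
    using p1 p2 p3 by auto
  let ?P = "{p1, p2, p3}"
  have "p1 \<noteq> p2" "p2 \<noteq> p3" "p1 \<noteq> p3" using p(1-3) A(2-4) by auto
  hence cP: "card ?P = 3" by simp
  have PX: "?P \<subseteq> X" using p by auto
  have GP: "G \<subseteq> {B \<in> bs X b. ?P \<subseteq> B}"
  proof
    fix B assume B: "B \<in> G"
    have "A1 \<inter> B \<noteq> {}" "A2 \<inter> B \<noteq> {}" "A3 \<inter> B \<noteq> {}"
      using assms(5) B inF unfolding cross_intersecting_def by blast+
    hence "p1 \<in> B" "p2 \<in> B" "p3 \<in> B" using p(1-3) by blast+
    moreover have "B \<in> bs X b" using B assms(4) by blast
    ultimately show "B \<in> {B \<in> bs X b. ?P \<subseteq> B}" by simp
  qed
  have fin: "finite {B \<in> bs X b. ?P \<subseteq> B}" by (rule bs_finite[OF assms(1), of _ b]) blast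
  have cG: "card G \<le> m - 3 choose (b - 3)"
  proof -
    have "card G \<le> card {B \<in> bs X b. ?P \<subseteq> B}" using card_mono[OF fin GP] .
    also have "\<dots> \<le> card X - card ?P choose (b - card ?P)" by (rule count_containing[OF assms(1) PX])
    finally show ?thesis unfolding cP assms(2) .
  qed
  show False
  proof (cases "b < 3")
    case True
    have "G = {}"
    proof (rule ccontr)
      assume "G \<noteq> {}"
      then obtain B where "B \<in> G" by blast
      hence "B \<in> bs X b" "?P \<subseteq> B" using GP by auto
      hence BX: "B \<subseteq> X" "card B = b" "?P \<subseteq> B" unfolding bs_def by auto
      have "finite B" using BX(1) assms(1) finite_subset by blast
      hence "card ?P \<le> card B" using BX(3) card_mono by blast
      hence "card ?P \<le> b" using BX(2) by simp
      thus False using cP True by simp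
    qed
    thus False using assms(6) by simp
  next
    case False
    hence "m - 3 choose (b - 3) \<le> be m b" unfolding be_def by simp
    thus False using cG assms(6) by simp
  qed
qed

lemma base_b2:
  assumes "finite X" "card X = m" "F \<subseteq> bs X a" "G \<subseteq> bs X 2" "cross_intersecting F G"
    "G \<noteq> {}" "a \<ge> 2" "m \<ge> a + 2"
  shows "card F + ga m a 2 \<le> al m a"
proof -
  obtain B where B: "B \<in> G" using assms by blast
  have Bx: "B \<subseteq> X" "card B = 2" using B assms(4) unfolding bs_def by auto
  have "F \<subseteq> bs X a - bs (X - B) a"
  proof
    fix A assume A: "A \<in> F"
    have "A \<inter> B \<noteq> {}" using A B assms(5) unfolding cross_intersecting_def by blast
    thus "A \<in> bs X a - bs (X - B) a" using A assms(3) unfolding bs_def by auto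
  qed
  have f1: "finite (bs X a)" using bs_finite[OF assms(1)] by blast
  have f2: "finite (bs (X - B) a)" using bs_finite[of "X - B"] assms(1) by blast
  have sub: "bs (X - B) a \<subseteq> bs X a" unfolding bs_def by auto
  have "card F \<le> card (bs X a - bs (X - B) a)"
    using \<open>F \<subseteq> bs X a - bs (X - B) a\<close> f1 by (intro card_mono) auto
  also have "\<dots> = card (bs X a) - card (bs (X - B) a)"
    using card_Diff_subset[OF f2 sub] .
  also have "\<dots> = (m choose a) - (m - 2 choose a)"
    using assms(1,2) Bx by (simp add: card_bs card_Diff_subset finite_subset)
  finally show ?thesis using b2_arith[OF assms(7,8)] by linarith
qed

lemma base_eq:
  assumes "finite X" "card X = m" "F \<subseteq> bs X a" "G \<subseteq> bs X b" "cross_intersecting F G"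
    "be m b < card G" "a \<ge> 2" "b \<ge> 3" "m = a + b"
  shows "card F + ga m a b \<le> al m a"
proof -
  have inj: "inj_on (\<lambda>A. X - A) F"
  proof (rule inj_onI)
    fix A B assume "A \<in> F" "B \<in> F" "X - A = X - B"
    moreover have "A \<subseteq> X" "B \<subseteq> X" using \<open>A \<in> F\<close> \<open>B \<in> F\<close> assms(3) unfolding bs_def by auto
    ultimately show "A = B" by blast
  qed
  have im: "(\<lambda>A. X - A) ` F \<subseteq> bs X b - G"
  proof
    fix C assume "C \<in> (\<lambda>A. X - A) ` F"
    then obtain A where A: "A \<in> F" "C = X - A" by blast
    have Ax: "A \<subseteq> X" "card A = a" using A assms(3) unfolding bs_def by auto
    have "card C = b" using A Ax assms(1,2,9) by (simp add: card_Diff_subset finite_subset)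
    moreover have "C \<notin> G" using A assms(5) unfolding cross_intersecting_def by blast
    ultimately show "C \<in> bs X b - G" using A unfolding bs_def by auto
  qed
  have fb: "finite (bs X b)" using bs_finite[OF assms(1)] by blast
  have "card F = card ((\<lambda>A. X - A) ` F)" using card_image[OF inj] by simp
  also have "\<dots> \<le> card (bs X b - G)" using im fb by (intro card_mono) auto
  also have "\<dots> = card (bs X b) - card G" using assms(4) fb by (simp add: card_Diff_subset finite_subset)
  also have "\<dots> = (a + b choose a) - card G"
    using card_bs[OF assms(1), of b] assms(2,9) binomial_symmetric[of a "a+b"] by simp
  finally have "card F + card G \<le> (a + b choose a)"
    using card_mono[OF fb assms(4)] card_bs[OF assms(1), of b] assms(2,9) binomial_symmetric[of a "a+b"] by simp
  moreover have "ga m a b = 1" using assms unfolding ga_def by simp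
  moreover have "(a + b choose a) \<le> al m a + be m b" using base_eq_arith[OF assms(7,8)] assms(9) by simp
  ultimately show ?thesis using assms(6) by linarith
qed



lemma step_case:
  fixes X :: "'a set"
  assumes IH: "\<And>(X::'a set) F G a b. finite X \<Longrightarrow> card X = m - 1 \<Longrightarrow> F \<subseteq> bs X a \<Longrightarrow> G \<subseteq> bs X b \<Longrightarrow>
      cross_intersecting F G \<Longrightarrow> a + b \<le> m - 1 \<Longrightarrow> 2 \<le> b \<Longrightarrow> be (m - 1) b < card G \<Longrightarrow>
      card F + ga (m - 1) a b \<le> al (m - 1) a"
  and X: "finite X" "card X = m" and FG: "F \<subseteq> bs X a" "G \<subseteq> bs X b" "cross_intersecting F G"
  and ab: "a \<ge> 2" "b \<ge> 3" "a + b + 1 \<le> m" and big: "be m b < card G"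
  shows "card F + ga m a b \<le> al m a"
proof -
  have "X \<noteq> {}" using X ab by auto
  then obtain t where t: "t \<in> X" by blast
  obtain F' G' where P: "F' \<subseteq> bs X a" "G' \<subseteq> bs X b" "card F' = card F" "card G' = card G"
    "cross_intersecting F' G'" "stable X t F'" "stable X t G'"
    using exists_stable[OF X(1) t FG] by blast
  define X' where "X' = X - {t}"
  have X': "finite X'" "card X' = m - 1" using X t unfolding X'_def by auto
  define F0 where "F0 = {A \<in> F'. t \<notin> A}"
  define F1 where "F1 = (\<lambda>A. A - {t}) ` {A \<in> F'. t \<in> A}"
  define G0 where "G0 = {A \<in> G'. t \<notin> A}"
  define G1 where "G1 = (\<lambda>A. A - {t}) ` {A \<in> G'. t \<in> A}"
  have fF: "finite F'" "finite G'" using bs_finite X P by blast+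
  have cF: "card F = card F0 + card F1" using split_card[OF fF(1), of t] P(3) unfolding F0_def F1_def by simp
  have cG: "card G = card G0 + card G1" using split_card[OF fF(2), of t] P(4) unfolding G0_def G1_def by simp
  have F0s: "F0 \<subseteq> bs X' a" unfolding F0_def X'_def using split0[OF P(1)] .
  have G0s: "G0 \<subseteq> bs X' b" unfolding G0_def X'_def using split0[OF P(2)] .
  have F1s: "F1 \<subseteq> bs X' (a - 1)" unfolding F1_def X'_def using split1[OF X(1) P(1)] .
  have G1s: "G1 \<subseteq> bs X' (b - 1)" unfolding G1_def X'_def using split1[OF X(1) P(2)] .
  have inX: "\<And>A. A \<in> F' \<Longrightarrow> A \<subseteq> X \<and> card A = a" "\<And>B. B \<in> G' \<Longrightarrow> B \<subseteq> X \<and> card B = b"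
    using P unfolding bs_def by auto
  have fin: "\<And>A. A \<subseteq> X \<Longrightarrow> finite A" using X(1) finite_subset by blast
  have c00: "cross_intersecting F0 G0" using P(5) unfolding F0_def G0_def cross_intersecting_def by blast
  have c10: "cross_intersecting F1 G0"
    unfolding cross_intersecting_def
  proof (intro ballI notI)
    fix A' B assume A': "A' \<in> F1" and B: "B \<in> G0" and d: "A' \<inter> B = {}"
    then obtain A where A: "A \<in> F'" "t \<in> A" "A' = A - {t}" unfolding F1_def by blast
    have B': "B \<in> G'" using B unfolding G0_def by blast
    have "card (A \<union> B) \<le> card A + card B" by (rule card_Un_le)
    hence "card (A \<union> B) < card X" using inX A(1) B' X(2) ab by simp
    thus False using stable_aux[OF X(1) P(6) P(5) A(1,2) B'] d A inX A(1) B' by blast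
  qed
  have c01: "cross_intersecting F0 G1"
    unfolding cross_intersecting_def
  proof (intro ballI notI)
    fix A B' assume A: "A \<in> F0" and B': "B' \<in> G1" and d: "A \<inter> B' = {}"
    then obtain B where B: "B \<in> G'" "t \<in> B" "B' = B - {t}" unfolding G1_def by blast
    have A': "A \<in> F'" using A unfolding F0_def by blast
    have "card (B \<union> A) \<le> card B + card A" by (rule card_Un_le)
    hence "card (B \<union> A) < card X" using inX A' B(1) X(2) ab by simp
    moreover have "(B - {t}) \<inter> A = {}" using d B by blast
    ultimately show False using stable_aux[OF X(1) P(7) cross_sym[OF P(5)] B(1,2) A'] inX A' B(1) by blast
  qed
  have c11: "cross_intersecting F1 G1"
    unfolding cross_intersecting_def
  proof (intro ballI notI)
    fix A' B' assume A': "A' \<in> F1" and B': "B' \<in> G1" and d: "A' \<inter> B' = {}"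
    then obtain A where A: "A \<in> F'" "t \<in> A" "A' = A - {t}" unfolding F1_def by blast
    obtain B where B: "B \<in> G'" "t \<in> B" "B' = B - {t}" using B' unfolding G1_def by blast
    have "card A + card B = card (A \<union> B) + card (A \<inter> B)"
      by (rule card_Un_Int) (use fin inX A(1) B(1) in auto)
    moreover have "card (A \<inter> B) \<ge> 1"
    proof -
      have "finite (A \<inter> B)" using fin inX A(1) by blast
      moreover have "t \<in> A \<inter> B" using A B by blast
      ultimately show ?thesis by (metis card_0_eq empty_iff less_one not_le)
    qed
    ultimately have "card (A \<union> B) < card X" using inX A(1) B(1) X(2) ab by simp
    moreover have "(A - {t}) \<inter> B = {}" using d A B by blast
    ultimately show False using stable_aux[OF X(1) P(6) P(5) A(1,2) B(1)] inX A(1) B(1) by blast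
  qed
  have bp: "be m b = be (m - 1) b + be (m - 1) (b - 1)" using be_pascal ab by simp
  have ap: "al m a = al (m - 1) a + al (m - 1) (a - 1)" using al_pascal ab by simp
  have "be (m - 1) b < card G0 \<or> be (m - 1) (b - 1) < card G1" using big bp cG by linarith
  have s1: "a + b \<le> m - 1" "a - 1 + b \<le> m - 1" "a + (b - 1) \<le> m - 1" "a - 1 + (b - 1) \<le> m - 1"
    "2 \<le> b" "2 \<le> b - 1" using ab by auto
  from \<open>be (m - 1) b < card G0 \<or> be (m - 1) (b - 1) < card G1\<close> show ?thesis
  proof
    assume g0: "be (m - 1) b < card G0"
    have h1: "card F0 + ga (m - 1) a b \<le> al (m - 1) a"
      by (rule IH[OF X' F0s G0s c00 s1(1) s1(5) g0])
    have h2: "card F1 + ga (m - 1) (a - 1) b \<le> al (m - 1) (a - 1)"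
      by (rule IH[OF X' F1s G0s c10 s1(2) s1(5) g0])
    show ?thesis using h1 h2 cF ap ga_pascal[where a=a and m=m and b=b] ab by linarith
  next
    assume g1: "be (m - 1) (b - 1) < card G1"
    have h1: "card F0 + ga (m - 1) a (b - 1) \<le> al (m - 1) a"
      by (rule IH[OF X' F0s G1s c01 s1(3) s1(6) g1])
    have h2: "card F1 + ga (m - 1) (a - 1) (b - 1) \<le> al (m - 1) (a - 1)"
      by (rule IH[OF X' F1s G1s c11 s1(4) s1(6) g1])
    show ?thesis using h1 h2 cF ap ga_shift[of b m a] ab by linarith
  qed
qed



lemma key:
  fixes X :: "'a set"
  shows "finite X \<Longrightarrow> card X = m \<Longrightarrow> F \<subseteq> bs X a \<Longrightarrow> G \<subseteq> bs X b \<Longrightarrow>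
    cross_intersecting F G \<Longrightarrow> a + b \<le> m \<Longrightarrow> 2 \<le> b \<Longrightarrow> be m b < card G \<Longrightarrow>
    card F + ga m a b \<le> al m a"
proof (induction m arbitrary: X F G a b rule: less_induct)
  case (less m)
  have Gne: "G \<noteq> {}" using less.prems(8) by auto
  show ?case
  proof (cases "a = 0")
    case True
    thus ?thesis using base_a0[OF less.prems(1)] less.prems(3,5) Gne by (simp add: ga_def al_def)
  next
    case a0: False
    show ?thesis
    proof (cases "a = 1")
      case True
      thus ?thesis using base_a1[OF less.prems(1,2)] less.prems(3,4,5,8) by (simp add: ga_def al_def)
    next
      case a1: False
      hence a2: "a \<ge> 2" using a0 by simp
      show ?thesis
      proof (cases "b = 2")
        case True
        thus ?thesis using base_b2[OF less.prems(1,2,3) _ less.prems(5) Gne a2] less.prems(4,6) by simp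
      next
        case False
        hence b3: "b \<ge> 3" using less.prems(7) by simp
        show ?thesis
        proof (cases "m = a + b")
          case True
          thus ?thesis using base_eq[OF less.prems(1-5,8) a2 b3] by simp
        next
          case False
          hence ab: "a + b + 1 \<le> m" using less.prems(6) by simp
          have lt: "m - 1 < m" using ab by simp
          show ?thesis
            by (rule step_case[OF less.IH[OF lt] less.prems(1-5) a2 b3 ab less.prems(8)])
        qed
      qed
    qed
  qed
qed

theorem mainTheorem12:
  fixes n k x y :: nat and F G :: "nat set set"
  assumes "k \<ge> 4" and "n \<ge> 2 * k"
    and "F \<subseteq> {A. A \<subseteq> {1..n} \<and> card A = k}"
    and "G \<subseteq> {A. A \<subseteq> {1..n} \<and> card A = k}"
    and "cross_intersecting F G"
    and "x \<in> {1..n}" and "y \<in> {1..n}" and "x \<noteq> y"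
    and "card (link2 F x y) \<ge> (n - 3 choose (k - 3)) + (n - 4 choose (k - 3)) + (n - 6 choose (k - 4))"
  shows "card (avoid2 G x y) \<le> (n - 5 choose (k - 3)) + (n - 6 choose (k - 3))"
proof (rule ccontr)
  assume neg: "\<not> ?thesis"
  define X where "X = {1..n} - {x, y}"
  have fX: "finite X" unfolding X_def by simp
  have cX: "card X = n - 2" unfolding X_def using assms(6-8) by (simp add: card_Diff_subset)
  have FF: "link2 F x y \<subseteq> bs X (k - 2)"
  proof
    fix C assume "C \<in> link2 F x y"
    then obtain A where A: "A \<in> F" "{x, y} \<subseteq> A" "C = A - {x, y}" unfolding link2_def by blast
    have Ak: "A \<subseteq> {1..n}" "card A = k" using A assms(3) by auto
    have "finite A" using Ak finite_subset by blast
    hence "card C = k - 2" using A Ak assms(8) by (simp add: card_Diff_subset)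
    thus "C \<in> bs X (k - 2)" using A Ak unfolding bs_def X_def by auto
  qed
  have GG: "avoid2 G x y \<subseteq> bs X k"
    using assms(4) unfolding avoid2_def bs_def X_def by auto
  have cr: "cross_intersecting (link2 F x y) (avoid2 G x y)"
    unfolding cross_intersecting_def
  proof (intro ballI)
    fix C B assume C: "C \<in> link2 F x y" and B: "B \<in> avoid2 G x y"
    then obtain A where A: "A \<in> F" "C = A - {x, y}" unfolding link2_def by blast
    have "B \<in> G" "B \<inter> {x, y} = {}" using B unfolding avoid2_def by auto
    moreover have "A \<inter> B \<noteq> {}" using A(1) \<open>B \<in> G\<close> assms(5) unfolding cross_intersecting_def by blast
    ultimately show "C \<inter> B \<noteq> {}" using A(2) by blast
  qed
  have s: "k - 2 + k \<le> n - 2" "2 \<le> k" using assms(1,2) by auto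
  have bev: "be (n - 2) k = (n - 5 choose (k - 3)) + (n - 6 choose (k - 3))"
    using assms(1) unfolding be_def by (simp add: numeral_eq_Suc)
  have big: "be (n - 2) k < card (avoid2 G x y)" using neg bev by simp
  have r: "card (link2 F x y) + ga (n - 2) (k - 2) k \<le> al (n - 2) (k - 2)"
    by (rule key[OF fX cX FF GG cr s big])
  have alv: "al (n - 2) (k - 2) = (n - 3 choose (k - 3)) + (n - 4 choose (k - 3)) + (n - 6 choose (k - 4))"
    using assms(1) unfolding al_def by (simp add: numeral_eq_Suc)
  have "ga (n - 2) (k - 2) k = (n - k - 4 choose (k - 4))"
    using assms(1) unfolding ga_def by (simp add: numeral_eq_Suc)
  moreover have "0 < (n - k - 4 choose (k - 4))" using assms(1,2) by (intro zero_less_binomial) simp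
  ultimately show False using r alv assms(9) by linarith
qed


end
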